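(* Let $c \ge 3$, let $H$ be a convex polygon in the plane with $c$ vertices, and let $T$ be a triangulation of $H$. Then every Sperner labelling of $T$ has a triangle of $T$ whose three vertices have three different labels.
   Context: A triangulation $T$ of $H$ is a subdivision of $H$ into finitely many triangles meeting face-to-face, whose vertex set contains the vertices of $H$. A Sperner labelling of $T$ is a function from the vertices of $T$ to $\{0,\dots,c-1\}$ such that the $c$ vertices of $H$ receive pairwise different labels, and every vertex of $T$ lying on the boundary of $H$ between two consecutive vertices $u,w$ of $H$ (on the edge $uw$) receives the label of $u$ or the label of $w$. *)

theory Defs
  imports "HOL-Analysis.Analysis"
begin

definition polygon_vertices :: "(real^2) set \<Rightarrow> (real^2) set" where
  "polygon_vertices H = {v. v extreme_point_of H}"

definition convex_polygon :: "(real^2) set \<Rightarrow> nat \<Rightarrow> bool" where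
  "convex_polygon H c \<longleftrightarrow> polytope H \<and> aff_dim H = 2 \<and> card (polygon_vertices H) = c"

definition tri_vertices :: "(real^2) set set \<Rightarrow> (real^2) set" where
  "tri_vertices T = (\<Union>t\<in>T. {v. v extreme_point_of t})"

text \<open>T is a triangulation of H: finitely many triangles (2-simplices) meeting
  face-to-face, covering H, whose vertex set contains the vertices of H.\<close>
definition triangulation_of :: "(real^2) set set \<Rightarrow> (real^2) set \<Rightarrow> bool" where
  "triangulation_of T H \<longleftrightarrow>
     triangulation T \<and> (\<forall>t\<in>T. 2 simplex t) \<and> \<Union>T = H \<and>
     polygon_vertices H \<subseteq> tri_vertices T"

definition sperner_labelling ::
  "(real^2) set \<Rightarrow> nat \<Rightarrow> (real^2) set set \<Rightarrow> (real^2 \<Rightarrow> nat) \<Rightarrow> bool" where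
  "sperner_labelling H c T L \<longleftrightarrow>
     (\<forall>x\<in>tri_vertices T. L x < c) \<and>
     inj_on L (polygon_vertices H) \<and>
     (\<forall>u w x. u \<in> polygon_vertices H \<and> w \<in> polygon_vertices H \<and> u \<noteq> w \<and>
              closed_segment u w face_of H \<and>
              x \<in> tri_vertices T \<and> x \<in> closed_segment u w
              \<longrightarrow> L x = L u \<or> L x = L w)"

end

theory Submission
  imports Defs
begin



lemma aff_indep_coords_unique:
  fixes c :: "'a::euclidean_space set"
  assumes "finite c" "\<not> affine_dependent c"
    "sum l c = 1" "(\<Sum>v\<in>c. l v *\<^sub>R v) = x"
    "sum m c = 1" "(\<Sum>v\<in>c. m v *\<^sub>R v) = x" "v \<in> c"
  shows "l v = m v"
proof -
  let ?U = "\<lambda>v. l v - m v"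
  have "sum ?U c = 0" using assms by (simp add: sum_subtractf)
  moreover have "(\<Sum>v\<in>c. ?U v *\<^sub>R v) = 0" using assms
    by (simp add: scaleR_diff_left sum_subtractf)
  ultimately show ?thesis using assms(1,2,7) affine_dependent_explicit_finite[OF assms(1)]
    by auto
qed

definition bc :: "'a::euclidean_space set \<Rightarrow> 'a \<Rightarrow> 'a \<Rightarrow> real" where
  "bc c x = (THE l. (\<forall>v. v \<notin> c \<longrightarrow> l v = 0) \<and> sum l c = 1 \<and> (\<Sum>v\<in>c. l v *\<^sub>R v) = x)"

lemma bc_eq:
  fixes c :: "'a::euclidean_space set"
  assumes "finite c" "\<not> affine_dependent c"
    "\<forall>v. v \<notin> c \<longrightarrow> l v = 0" "sum l c = 1" "(\<Sum>v\<in>c. l v *\<^sub>R v) = x"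
  shows "bc c x = l"
  unfolding bc_def
proof (rule the_equality)
  fix m assume m: "(\<forall>v. v \<notin> c \<longrightarrow> m v = 0) \<and> sum m c = 1 \<and> (\<Sum>v\<in>c. m v *\<^sub>R v) = x"
  show "m = l"
  proof
    fix v show "m v = l v"
      using m assms aff_indep_coords_unique[of c m x l v] by (cases "v \<in> c") auto
  qed
qed (use assms in auto)

lemma bc_exists:
  fixes c :: "'a::euclidean_space set"
  assumes "finite c" "x \<in> affine hull c"
  shows "\<exists>l. (\<forall>v. v \<notin> c \<longrightarrow> l v = 0) \<and> sum l c = 1 \<and> (\<Sum>v\<in>c. l v *\<^sub>R v) = x"
proof -
  obtain u where u: "sum u c = 1" "(\<Sum>v\<in>c. u v *\<^sub>R v) = x"
    using assms affine_hull_finite by blast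
  show ?thesis
    by (rule exI[of _ "\<lambda>v. if v \<in> c then u v else 0"]) (use u in \<open>auto cong: sum.cong\<close>)
qed

lemma bc_props:
  fixes c :: "'a::euclidean_space set"
  assumes "finite c" "\<not> affine_dependent c" "x \<in> affine hull c"
  shows "\<forall>v. v \<notin> c \<longrightarrow> bc c x v = 0" "sum (bc c x) c = 1" "(\<Sum>v\<in>c. bc c x v *\<^sub>R v) = x"
proof -
  obtain l where "(\<forall>v. v \<notin> c \<longrightarrow> l v = 0) \<and> sum l c = 1 \<and> (\<Sum>v\<in>c. l v *\<^sub>R v) = x"
    using bc_exists assms by blast
  then have "bc c x = l" using bc_eq assms by blast
  then show "\<forall>v. v \<notin> c \<longrightarrow> bc c x v = 0" "sum (bc c x) c = 1" "(\<Sum>v\<in>c. bc c x v *\<^sub>R v) = x"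
    using \<open>(\<forall>v. v \<notin> c \<longrightarrow> l v = 0) \<and> sum l c = 1 \<and> (\<Sum>v\<in>c. l v *\<^sub>R v) = x\<close> by auto
qed

lemma bc_continuous:
  fixes c :: "'a::euclidean_space set"
  assumes "finite c" "\<not> affine_dependent c" "affine hull c = UNIV"
  shows "continuous_on S (\<lambda>x. bc c x v)"
proof -
  define h where "h x = bc c x v - bc c 0 v" for x
  have P: "\<forall>v. v \<notin> c \<longrightarrow> bc c x v = 0" "sum (bc c x) c = 1" "(\<Sum>v\<in>c. bc c x v *\<^sub>R v) = x" for x
    using bc_props[OF assms(1,2)] assms(3) by auto
  have add: "bc c (x + y) = (\<lambda>v. bc c x v + bc c y v - bc c 0 v)" for x y
    by (rule bc_eq[OF assms(1,2)])
       (use P[of x] P[of y] P[of 0] in \<open>auto simp: sum.distrib sum_subtractf scaleR_add_left scaleR_diff_left\<close>)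
  have mul: "bc c (r *\<^sub>R x) = (\<lambda>v. r * bc c x v + (1 - r) * bc c 0 v)" for r x
  proof (rule bc_eq[OF assms(1,2)])
    show "sum (\<lambda>v. r * bc c x v + (1 - r) * bc c 0 v) c = 1"
      using P[of x] P[of 0] by (simp add: sum.distrib sum_distrib_left[symmetric])
    show "(\<Sum>v\<in>c. (r * bc c x v + (1 - r) * bc c 0 v) *\<^sub>R v) = r *\<^sub>R x"
      using P[of x] P[of 0] by (simp add: sum.distrib scaleR_add_left flip: scaleR_scaleR scaleR_sum_right)
  qed (use P in auto)
  have "linear h"
    by (rule linearI) (auto simp: h_def add mul algebra_simps)
  then have "continuous_on S h"
    using linear_continuous_on linear_conv_bounded_linear by blast
  then have "continuous_on S (\<lambda>x. h x + bc c 0 v)"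
    by (intro continuous_intros)
  then show ?thesis by (simp add: h_def)
qed




definition verts :: "'a::real_vector set \<Rightarrow> 'a set" where
  "verts t = {v. v extreme_point_of t}"

lemma face_support:
  fixes P :: "'a::euclidean_space set"
  assumes "polyhedron P" "F face_of P" "finite c" "c \<subseteq> P" "\<forall>v\<in>c. 0 \<le> l v"
    "sum l c = 1" "(\<Sum>v\<in>c. l v *\<^sub>R v) = x" "x \<in> F" "v \<in> c" "l v > 0"
  shows "v \<in> F"
proof -
  have "F exposed_face_of P" by (simp add: exposed_face_of_polyhedron[OF assms(1)] assms(2))
  then obtain a b where ab: "P \<subseteq> {y. a \<bullet> y \<le> b}" "F = P \<inter> {y. a \<bullet> y = b}"
    unfolding exposed_face_of_def by (elim conjE exE) (rule that)
  have "a \<bullet> x = (\<Sum>v\<in>c. l v * (a \<bullet> v))"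
    unfolding assms(7)[symmetric] inner_sum_right inner_scaleR_right by (rule refl)
  moreover have "a \<bullet> x = b" using ab assms(8) by blast
  moreover have "(\<Sum>v\<in>c. l v * b) = b" using assms(6) by (metis mult_1 sum_distrib_right)
  ultimately have "(\<Sum>v\<in>c. l v * (b - a \<bullet> v)) = 0"
    by (simp only: right_diff_distrib sum_subtractf)
  moreover have nn: "\<forall>v\<in>c. 0 \<le> l v * (b - a \<bullet> v)"
  proof
    fix y assume "y \<in> c"
    then have "a \<bullet> y \<le> b" "0 \<le> l y" using assms(4,5) ab(1) by (blast, blast)
    then show "0 \<le> l y * (b - a \<bullet> y)" by simp
  qed
  moreover have "sum (\<lambda>y. l y * (b - a \<bullet> y)) c = 0 \<longleftrightarrow> (\<forall>y\<in>c. l y * (b - a \<bullet> y) = 0)"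
    by (rule sum_nonneg_eq_0_iff[OF assms(3)]) (use nn in blast)
  ultimately have "\<forall>y\<in>c. l y * (b - a \<bullet> y) = 0" by blast
  then have "l v * (b - a \<bullet> v) = 0" using assms(9) by (rule bspec)
  then have "a \<bullet> v = b" using assms(10) by simp
  moreover have "v \<in> P" using assms(4,9) by (rule subsetD)
  ultimately show ?thesis using ab(2) by (simp only: Int_iff mem_Collect_eq)
qed

lemma simplex2_facts:
  fixes t :: "(real^2) set"
  assumes "2 simplex t"
  shows "finite (verts t)" "\<not> affine_dependent (verts t)" "card (verts t) = 3"
    "t = convex hull (verts t)" "affine hull (verts t) = UNIV"
proof -
  obtain C where C: "\<not> affine_dependent C" "int (card C) = 2 + 1" "t = convex hull C"
    using assms unfolding simplex_def by blast
  have V: "verts t = C"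
    using C extreme_point_of_convex_hull_affine_independent by (auto simp: verts_def)
  show "finite (verts t)" using V C aff_independent_finite by blast
  show "\<not> affine_dependent (verts t)" using V C by simp
  show "card (verts t) = 3" using V C by simp
  show "t = convex hull (verts t)" using V C by simp
  have "aff_dim C = 2" using aff_dim_affine_independent[OF C(1)] C(2) by simp
  then show "affine hull (verts t) = UNIV" using V aff_dim_eq_full[of C] by simp
qed

lemma bc_simplex:
  fixes t :: "(real^2) set"
  assumes "2 simplex t" "x \<in> t"
  shows "\<forall>v. v \<notin> verts t \<longrightarrow> bc (verts t) x v = 0" "sum (bc (verts t) x) (verts t) = 1"
    "(\<Sum>v\<in>verts t. bc (verts t) x v *\<^sub>R v) = x" "\<forall>v. 0 \<le> bc (verts t) x v"
proof -
  note S = simplex2_facts[OF assms(1)]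
  show P: "\<forall>v. v \<notin> verts t \<longrightarrow> bc (verts t) x v = 0" "sum (bc (verts t) x) (verts t) = 1"
    "(\<Sum>v\<in>verts t. bc (verts t) x v *\<^sub>R v) = x"
    using bc_props[OF S(1,2)] S(5) by auto
  obtain u where u: "\<forall>y\<in>verts t. 0 \<le> u y" "sum u (verts t) = 1" "(\<Sum>y\<in>verts t. u y *\<^sub>R y) = x"
    using assms(2) S(4) convex_hull_finite[OF S(1)] by blast
  have "bc (verts t) x = (\<lambda>v. if v \<in> verts t then u v else 0)"
    by (rule bc_eq[OF S(1,2)]) (use u in \<open>auto cong: sum.cong\<close>)
  then show "\<forall>v. 0 \<le> bc (verts t) x v" using u by auto
qed

lemma bc_vertex:
  fixes t :: "(real^2) set"
  assumes "2 simplex t" "w \<in> verts t"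
  shows "bc (verts t) w = (\<lambda>v. if v = w then 1 else 0)"
proof -
  note S = simplex2_facts[OF assms(1)]
  have e: "(\<Sum>v\<in>verts t. (if v = w then 1 else 0) *\<^sub>R v) = (\<Sum>v\<in>verts t. if v = w then v else 0)"
    by (rule sum.cong) auto
  show ?thesis
    by (rule bc_eq[OF S(1,2)]) (use assms(2) S(1) e in \<open>simp_all add: sum.delta\<close>)
qed




lemma sum_eq_support:
  assumes "finite A" "finite B" "\<forall>v\<in>A-B. g v = 0" "\<forall>v\<in>B-A. g v = 0"
  shows "sum g A = sum g B"
proof -
  have "sum g A = sum g (A \<union> B)"
    by (rule sum.mono_neutral_left) (use assms in auto)
  moreover have "sum g B = sum g (A \<union> B)"
    by (rule sum.mono_neutral_left) (use assms in auto)
  ultimately show ?thesis by simp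
qed

definition G :: "(real^2 \<Rightarrow> real^2) \<Rightarrow> (real^2) set \<Rightarrow> real^2 \<Rightarrow> real^2" where
  "G P t x = (\<Sum>v\<in>verts t. bc (verts t) x v *\<^sub>R P v)"

lemma simplex2_polyhedron:
  fixes t :: "(real^2) set"
  assumes "2 simplex t" shows "polyhedron t" "polytope t"
proof -
  show "polytope t" unfolding polytope_def using simplex2_facts[OF assms] by blast
  then show "polyhedron t" by (rule polytope_imp_polyhedron)
qed

lemma verts_subset: "verts t \<subseteq> t"
  by (auto simp: verts_def extreme_point_of_def)

lemma G_welldef:
  assumes tri: "triangulation T" and simp2: "\<forall>t\<in>T. 2 simplex t"
    and tT: "t \<in> T" and t'T: "t' \<in> T" and x: "x \<in> t" "x \<in> t'"
  shows "G P t x = G P t' x"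
proof -
  define l where "l = bc (verts t) x"
  have s: "2 simplex t" "2 simplex t'" using simp2 tT t'T by auto
  note St = simplex2_facts[OF s(1)] and St' = simplex2_facts[OF s(2)]
  note B = bc_simplex[OF s(1) x(1), folded l_def]
  have f1: "(t \<inter> t') face_of t" using tri tT t'T unfolding triangulation_def by blast
  have f2: "(t \<inter> t') face_of t'" using tri tT t'T unfolding triangulation_def
    by (metis Int_commute)
  have sub: "v \<in> verts t'" if "v \<in> verts t" "l v \<noteq> 0" for v
  proof -
    have "l v > 0" using B(4) that(2) by (metis less_eq_real_def)
    have "v \<in> t \<inter> t'"
      by (rule face_support[OF simplex2_polyhedron(1)[OF s(1)] f1 St(1) verts_subset _ B(2) B(3) _ that(1)])
         (use B(4) x \<open>l v > 0\<close> in auto)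
    then have "v extreme_point_of (t \<inter> t')"
      using extreme_point_of_face[OF f1] that(1) by (auto simp: verts_def)
    then show ?thesis using extreme_point_of_face[OF f2] by (auto simp: verts_def)
  qed
  have z: "\<forall>v. v \<notin> verts t' \<longrightarrow> l v = 0" using sub B(1) by blast
  have zt: "\<forall>v. v \<notin> verts t \<longrightarrow> l v = 0" using B(1) by blast
  have sl: "sum l (verts t') = 1"
    using sum_eq_support[OF St(1) St'(1), of l] z zt B(2) by auto
  have xl: "(\<Sum>v\<in>verts t'. l v *\<^sub>R v) = x"
    using sum_eq_support[OF St(1) St'(1), of "\<lambda>v. l v *\<^sub>R v"] z zt B(3) by auto
  have "bc (verts t') x = l"
    by (rule bc_eq[OF St'(1,2) z sl xl])
  then show ?thesis
    unfolding G_def l_def[symmetric]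
    using sum_eq_support[OF St(1) St'(1), of "\<lambda>v. l v *\<^sub>R P v"] z zt by auto
qed

definition Fm :: "(real^2 \<Rightarrow> real^2) \<Rightarrow> (real^2) set set \<Rightarrow> real^2 \<Rightarrow> real^2" where
  "Fm P T x = G P (SOME t. t \<in> T \<and> x \<in> t) x"

lemma Fm_eq:
  assumes tri: "triangulation T" and simp2: "\<forall>t\<in>T. 2 simplex t"
    and tT: "t \<in> T" and x: "x \<in> t"
  shows "Fm P T x = G P t x"
proof -
  have "\<exists>t. t \<in> T \<and> x \<in> t" using tT x by blast
  then have "(SOME t. t \<in> T \<and> x \<in> t) \<in> T \<and> x \<in> (SOME t. t \<in> T \<and> x \<in> t)"
    by (rule someI_ex)
  then show ?thesis unfolding Fm_def using G_welldef[OF tri simp2 _ tT _ x] by blast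
qed

lemma G_cont:
  assumes "2 simplex t"
  shows "continuous_on S (G P t)"
proof -
  note St = simplex2_facts[OF assms]
  have "continuous_on S (\<lambda>x. \<Sum>v\<in>verts t. bc (verts t) x v *\<^sub>R P v)"
    by (intro continuous_on_sum continuous_on_scaleR continuous_on_const bc_continuous[OF St(1,2,5)])
  then show ?thesis unfolding G_def by (simp add: fun_eq_iff)
qed

lemma Fm_cont:
  assumes tri: "triangulation T" and simp2: "\<forall>t\<in>T. 2 simplex t"
  shows "continuous_on (\<Union>T) (Fm P T)"
proof -
  have fin: "finite T" using tri unfolding triangulation_def by blast
  have "continuous_on (\<Union>t\<in>T. t) (Fm P T)"
  proof (rule continuous_on_closed_Union[OF fin])
    fix t assume tT: "t \<in> T"
    then have s: "2 simplex t" using simp2 by blast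
    show "closed t" using simplex2_polyhedron(2)[OF s] polytope_imp_closed by blast
    show "continuous_on t (Fm P T)"
      using continuous_on_eq[OF G_cont[OF s, of t P]] Fm_eq[OF tri simp2 tT] by metis
  qed
  then show ?thesis by simp
qed





lemma Fm_vertex:
  assumes tri: "triangulation T" and simp2: "\<forall>t\<in>T. 2 simplex t"
    and v: "v \<in> tri_vertices T"
  shows "Fm P T v = P v"
proof -
  obtain t where tT: "t \<in> T" and vt: "v \<in> verts t"
    using v unfolding tri_vertices_def verts_def by blast
  have s: "2 simplex t" using simp2 tT by blast
  have "Fm P T v = G P t v" using Fm_eq[OF tri simp2 tT] vt verts_subset by blast
  also have "\<dots> = (\<Sum>v'\<in>verts t. (if v' = v then 1 else 0) *\<^sub>R P v')"
    unfolding G_def bc_vertex[OF s vt] by simp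
  also have "\<dots> = (\<Sum>v'\<in>verts t. if v' = v then P v else 0)"
    by (rule sum.cong) auto
  also have "\<dots> = P v" using vt simplex2_facts(1)[OF s] by (simp add: sum.delta)
  finally show ?thesis .
qed

lemma Fm_coord:
  assumes tri: "triangulation T" and simp2: "\<forall>t\<in>T. 2 simplex t"
    and tT: "t \<in> T" and x: "x \<in> t"
  shows "(Fm P T x)$i = (\<Sum>v\<in>verts t. bc (verts t) x v * (P v)$i)"
  using Fm_eq[OF tri simp2 tT x] unfolding G_def by simp

lemma facet_segment:
  fixes H :: "(real^2) set"
  assumes "polytope H" "aff_dim H = 2" "x \<in> rel_frontier H"
  shows "\<exists>y z. y \<noteq> z \<and> y \<in> polygon_vertices H \<and> z \<in> polygon_vertices H \<and>
           closed_segment y z face_of H \<and> x \<in> closed_segment y z"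
proof -
  obtain F where F: "F facet_of H" "x \<in> F"
    using assms rel_frontier_of_polyhedron[OF polytope_imp_polyhedron[OF assms(1)]] by blast
  have Ff: "F face_of H" "F \<noteq> {}" "aff_dim F = aff_dim H - 1" using F(1) unfolding facet_of_def by auto
  have pF: "polytope F" using face_of_polytope_polytope[OF assms(1) Ff(1)] .
  have a1: "aff_dim F = 1" using Ff(3) assms(2) by simp
  then have "collinear F" by (simp add: collinear_aff_dim)
  then obtain y z where yz: "F = closed_segment y z"
    using compact_convex_collinear_segment[OF Ff(2) polytope_imp_compact[OF pF] polytope_imp_convex[OF pF]] by blast
  have "y \<noteq> z"
  proof
    assume "y = z"
    then have "F = {y}" using yz by simp
    then show False using a1 by simp
  qed
  moreover have "y extreme_point_of F" "z extreme_point_of F"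
    using yz extreme_point_of_segment by auto
  then have "y \<in> polygon_vertices H" "z \<in> polygon_vertices H"
    using extreme_point_of_face[OF Ff(1)] unfolding polygon_vertices_def by auto
  ultimately show ?thesis using yz Ff(1) F(2) by blast
qed




lemma radial_retraction:
  fixes S :: "'a::euclidean_space set"
  assumes "convex S" "bounded S" and arelS: "a \<in> rel_interior S" and affU: "affine hull S = UNIV"
  obtains r where "continuous_on (UNIV - {a}) r"
    "\<And>x. x \<noteq> a \<Longrightarrow> r x \<in> rel_frontier S"
    "\<And>x. x \<noteq> a \<Longrightarrow> (\<exists>d>0. r x = a + d *\<^sub>R (x - a))"
    "\<And>x. x \<in> rel_frontier S \<Longrightarrow> r x = x"
proof -
  have "\<exists>d. 0 < d \<and> (a + d *\<^sub>R l) \<in> rel_frontier S \<and>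
            (\<forall>e. 0 \<le> e \<and> e < d \<longrightarrow> (a + e *\<^sub>R l) \<in> rel_interior S)"
    if "(a + l) \<in> affine hull S" "l \<noteq> 0" for l
    using ray_to_rel_frontier [OF \<open>bounded S\<close> arelS] that by metis
  then obtain dd
    where dd1: "\<And>l. \<lbrakk>(a + l) \<in> affine hull S; l \<noteq> 0\<rbrakk> \<Longrightarrow> 0 < dd l \<and> (a + dd l *\<^sub>R l) \<in> rel_frontier S"
      and dd2: "\<And>l e. \<lbrakk>(a + l) \<in> affine hull S; e < dd l; 0 \<le> e; l \<noteq> 0\<rbrakk>
                      \<Longrightarrow> (a + e *\<^sub>R l) \<in> rel_interior S"
    by metis+
  have aaffS: "a \<in> affine hull S"
    by (meson arelS subsetD hull_inc rel_interior_subset)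
  have "((\<lambda>z. z - a) ` (affine hull S - {a})) = ((\<lambda>z. z - a) ` (affine hull S)) - {0}"
    by auto
  moreover have "continuous_on (((\<lambda>z. z - a) ` (affine hull S)) - {0}) (\<lambda>x. dd x *\<^sub>R x)"
  proof (rule continuous_on_compact_surface_projection)
    show "compact (rel_frontier ((\<lambda>z. z - a) ` S))"
      by (simp add: \<open>bounded S\<close> bounded_translation_minus compact_rel_frontier_bounded)
    have releq: "rel_frontier ((\<lambda>z. z - a) ` S) = (\<lambda>z. z - a) ` rel_frontier S"
      using rel_frontier_translation [of "-a"] add.commute by simp
    also have "\<dots> \<subseteq> (\<lambda>z. z - a) ` (affine hull S) - {0}"
      using rel_frontier_affine_hull arelS rel_frontier_def by fastforce
    finally show "rel_frontier ((\<lambda>z. z - a) ` S) \<subseteq> (\<lambda>z. z - a) ` (affine hull S) - {0}" .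
    show "cone ((\<lambda>z. z - a) ` (affine hull S))"
      by (rule subspace_imp_cone)
         (use aaffS in \<open>simp add: subspace_affine image_comp o_def affine_translation_aux [of a]\<close>)
    show "(0 < k \<and> k *\<^sub>R x \<in> rel_frontier ((\<lambda>z. z - a) ` S)) \<longleftrightarrow> (dd x = k)"
         if x: "x \<in> (\<lambda>z. z - a) ` (affine hull S) - {0}" for k x
    proof
      show "dd x = k \<Longrightarrow> 0 < k \<and> k *\<^sub>R x \<in> rel_frontier ((\<lambda>z. z - a) ` S)"
      using dd1 [of x] that image_iff by (fastforce simp add: releq)
    next
      assume k: "0 < k \<and> k *\<^sub>R x \<in> rel_frontier ((\<lambda>z. z - a) ` S)"
      have False if "dd x < k"
      proof -
        have "k \<noteq> 0" "a + k *\<^sub>R x \<in> closure S"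
          using k closure_translation [of "-a"]
          by (auto simp: rel_frontier_def cong: image_cong_simp)
        then have segsub: "open_segment a (a + k *\<^sub>R x) \<subseteq> rel_interior S"
          by (metis rel_interior_closure_convex_segment [OF \<open>convex S\<close> arelS])
        have "x \<noteq> 0" and xaffS: "a + x \<in> affine hull S"
          using x by auto
        then have "0 < dd x" and inS: "a + dd x *\<^sub>R x \<in> rel_frontier S"
          using dd1 by auto
        moreover have "a + dd x *\<^sub>R x \<in> open_segment a (a + k *\<^sub>R x)"
          unfolding in_segment
        proof (intro conjI exI)
          show "a + dd x *\<^sub>R x = (1 - dd x / k) *\<^sub>R a + (dd x / k) *\<^sub>R (a + k *\<^sub>R x)"
            using k by (simp add: that algebra_simps)
        qed (use \<open>x \<noteq> 0\<close> \<open>0 < dd x\<close> that in auto)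
        ultimately show ?thesis
          using segsub by (auto simp: rel_frontier_def)
      qed
      moreover have False if "k < dd x"
        using x k that rel_frontier_def
        by (fastforce simp: algebra_simps releq dest!: dd2)
      ultimately show "dd x = k"
        by fastforce
    qed
  qed
  ultimately have *: "continuous_on ((\<lambda>z. z - a) ` (affine hull S - {a})) (\<lambda>x. dd x *\<^sub>R x)"
    by auto
  have "continuous_on (affine hull S - {a}) ((\<lambda>x. a + dd x *\<^sub>R x) \<circ> (\<lambda>z. z - a))"
    by (intro * continuous_intros continuous_on_compose)
  then have contdd: "continuous_on (UNIV - {a}) (\<lambda>x. a + dd (x-a) *\<^sub>R (x-a))"
    using affU by (simp add: o_def)
  show ?thesis
  proof
    show "continuous_on (UNIV - {a}) (\<lambda>x. a + dd (x-a) *\<^sub>R (x-a))" by (rule contdd)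
    show "a + dd (x-a) *\<^sub>R (x-a) \<in> rel_frontier S" if "x \<noteq> a" for x
      using dd1[of "x - a"] that affU by simp
    show "\<exists>d>0. a + dd (x-a) *\<^sub>R (x-a) = a + d *\<^sub>R (x - a)" if "x \<noteq> a" for x
      using dd1[of "x - a"] that affU by auto
    show "a + dd (x-a) *\<^sub>R (x-a) = x" if x: "x \<in> rel_frontier S" for x
      proof -
        have "x \<noteq> a"
          using that arelS by (auto simp: rel_frontier_def)
        have False if "dd (x-a) < 1"
        proof -
          have "x \<in> closure S"
            using x by (auto simp: rel_frontier_def)
          then have segsub: "open_segment a x \<subseteq> rel_interior S"
            by (metis rel_interior_closure_convex_segment [OF \<open>convex S\<close> arelS])
          have  xaffS: "x \<in> affine hull S"
            using affU by auto
          then have "0 < dd (x-a)" and inS: "a + dd (x-a) *\<^sub>R (x-a) \<in> rel_frontier S"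
            using dd1 by (auto simp: \<open>x \<noteq> a\<close>)
          moreover have "a + dd (x-a) *\<^sub>R (x-a) \<in> open_segment a x"
            unfolding in_segment
          proof (intro exI conjI)
            show "a + dd (x-a) *\<^sub>R (x-a) = (1 - dd (x-a)) *\<^sub>R a + (dd (x-a)) *\<^sub>R x"
              by (simp add: algebra_simps)
          qed (use  \<open>x \<noteq> a\<close> \<open>0 < dd (x-a)\<close> that in auto)
          ultimately show ?thesis
            using segsub by (auto simp: rel_frontier_def)
        qed
        moreover have False if "1 < dd (x-a)"
          using x that dd2 [of "x - a" 1] \<open>x \<noteq> a\<close> closure_affine_hull
          by (auto simp: rel_frontier_def)
        ultimately have "dd (x-a) = 1"
          by fastforce
        with that show ?thesis
          by (simp add: rel_frontier_def)
      qed
  qed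
qed




lemma seg_not_H:
  fixes H :: "(real^2) set"
  assumes "aff_dim H = 2"
  shows "closed_segment u w \<noteq> H"
proof
  assume "closed_segment u w = H"
  then have "collinear H" using collinear_closed_segment by metis
  then show False using assms by (simp add: collinear_aff_dim)
qed

lemma indep:
  fixes H :: "(real^2) set"
  assumes "polytope H" "aff_dim H = 2" "closed_segment u w face_of H" "u \<noteq> w"
    "z0 \<in> rel_interior H" "c1 *\<^sub>R (u - z0) + c2 *\<^sub>R (w - z0) = 0"
  shows "c1 = 0 \<and> c2 = 0"
proof (rule ccontr)
  assume nz: "\<not> (c1 = 0 \<and> c2 = 0)"
  have eq: "c1 *\<^sub>R u + c2 *\<^sub>R w = (c1 + c2) *\<^sub>R z0"
    using assms(6) by (simp add: algebra_simps)
  show False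
  proof (cases "c1 + c2 = 0")
    case True
    then have "c2 = - c1" by simp
    then have "c1 *\<^sub>R (u - w) = 0" using eq by (simp add: algebra_simps)
    then show False using nz \<open>c2 = - c1\<close> assms(4) by simp
  next
    case False
    have "closed_segment u w exposed_face_of H"
      by (simp add: exposed_face_of_polyhedron[OF polytope_imp_polyhedron[OF assms(1)]] assms(3))
    then obtain n \<beta> where nb: "H \<subseteq> {y. n \<bullet> y \<le> \<beta>}" "closed_segment u w = H \<inter> {y. n \<bullet> y = \<beta>}"
      unfolding exposed_face_of_def by (elim conjE exE) (rule that)
    have "u \<in> closed_segment u w" "w \<in> closed_segment u w" by auto
    then have nu: "n \<bullet> u = \<beta>" "n \<bullet> w = \<beta>" using nb(2) by blast+
    have "(c1 + c2) * (n \<bullet> z0) = c1 * (n \<bullet> u) + c2 * (n \<bullet> w)"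
      using arg_cong[OF eq, of "\<lambda>y. n \<bullet> y"] by (simp add: inner_add_right)
    then have "(c1 + c2) * (n \<bullet> z0) = (c1 + c2) * \<beta>" using nu by (simp add: algebra_simps)
    then have "n \<bullet> z0 = \<beta>" using False by simp
    moreover have "z0 \<in> H" using assms(5) rel_interior_subset by blast
    ultimately have "z0 \<in> closed_segment u w" using nb(2) by blast
    then show False
      using face_of_disjoint_rel_interior[OF assms(3) seg_not_H[OF assms(2)]] assms(5) by blast
  qed
qed

lemma boundary_path:
  fixes H :: "(real^2) set"
  assumes pH: "polytope H" and aH: "aff_dim H = 2" and fH: "closed_segment u w face_of H" and uw: "u \<noteq> w"
  obtains g where "path g" "pathstart g = w" "pathfinish g = u"
     "path_image g \<subseteq> rel_frontier H - open_segment u w"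
proof -
  have cH: "convex H" "bounded H" "compact H" using pH polytope_imp_convex polytope_imp_bounded polytope_imp_compact by auto
  have "H \<noteq> {}" using aH by auto
  then obtain z0 where z0: "z0 \<in> rel_interior H" using rel_interior_eq_empty[OF cH(1)] by blast
  have affU: "affine hull H = UNIV" using aH aff_dim_eq_full[of H] by simp
  obtain r where r: "continuous_on (UNIV - {z0}) r"
    "\<And>x. x \<noteq> z0 \<Longrightarrow> r x \<in> rel_frontier H"
    "\<And>x. x \<noteq> z0 \<Longrightarrow> (\<exists>d>0. r x = z0 + d *\<^sub>R (x - z0))"
    "\<And>x. x \<in> rel_frontier H \<Longrightarrow> r x = x"
    using radial_retraction[OF cH(1,2) z0 affU] by blast
  have segH: "closed_segment u w \<subseteq> H" using face_of_imp_subset[OF fH] .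
  have dis: "closed_segment u w \<inter> rel_interior H = {}"
    using face_of_disjoint_rel_interior[OF fH seg_not_H[OF aH]] .
  have clH: "closure H = H" using cH(3) by (simp add: compact_imp_closed)
  have urf: "u \<in> rel_frontier H" "w \<in> rel_frontier H"
    using segH dis clH by (auto simp: rel_frontier_def)
  note ind = indep[OF pH aH fH uw z0]
  define a where "a = u - z0"
  define b where "b = w - z0"
  define q where "q = z0 - a - b"
  have notin: False if A: "r y \<in> open_segment u w" "y - z0 = c1 *\<^sub>R a + c2 *\<^sub>R b" "y \<noteq> z0"
     "c1 \<le> 0 \<or> c2 \<le> 0" for y c1 c2
  proof -
    obtain d where d: "d > 0" "r y = z0 + d *\<^sub>R (y - z0)" using r(3) A(3) by blast
    obtain m where m: "0 < m" "m < 1" "r y = (1 - m) *\<^sub>R u + m *\<^sub>R w"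
      using A(1) unfolding in_segment by blast
    have "(d * c1 - (1 - m)) *\<^sub>R (u - z0) + (d * c2 - m) *\<^sub>R (w - z0) = 0"
      using d(2) m(3) A(2) unfolding a_def b_def by (simp add: algebra_simps)
    then have "d * c1 - (1 - m) = 0 \<and> d * c2 - m = 0" by (rule ind)
    then have "d * c1 > 0" "d * c2 > 0" using m by auto
    then show False using A(4) d(1) by (simp add: zero_less_mult_iff)
  qed
  have seg1: "y \<noteq> z0 \<and> r y \<notin> open_segment u w" if Y: "y \<in> closed_segment w q" for y
  proof -
    obtain s where s: "0 \<le> s" "s \<le> 1" "y = (1 - s) *\<^sub>R w + s *\<^sub>R q"
      using Y unfolding in_segment by blast
    have yo: "y - z0 = (- s) *\<^sub>R a + (1 - (s + s)) *\<^sub>R b"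
      using s(3) unfolding q_def a_def b_def by (simp add: vec_eq_iff algebra_simps)
    have yz: "y \<noteq> z0"
    proof
      assume "y = z0"
      then have "(- s) *\<^sub>R a + (1 - (s + s)) *\<^sub>R b = 0" using yo by simp
      then have "(- s) *\<^sub>R (u - z0) + (1 - (s + s)) *\<^sub>R (w - z0) = 0" unfolding a_def b_def .
      then have "- s = 0 \<and> 1 - (s + s) = 0" by (rule ind)
      then show False by linarith
    qed
    have "- s \<le> 0 \<or> 1 - (s + s) \<le> 0" using s(1) by simp
    then show ?thesis using notin[OF _ yo yz] yz by blast
  qed
  have seg2: "y \<noteq> z0 \<and> r y \<notin> open_segment u w" if Y: "y \<in> closed_segment q u" for y
  proof -
    obtain s where s: "0 \<le> s" "s \<le> 1" "y = (1 - s) *\<^sub>R q + s *\<^sub>R u"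
      using Y unfolding in_segment by blast
    have yo: "y - z0 = ((s + s) - 1) *\<^sub>R a + (s - 1) *\<^sub>R b"
      using s(3) unfolding q_def a_def b_def by (simp add: vec_eq_iff algebra_simps)
    have yz: "y \<noteq> z0"
    proof
      assume "y = z0"
      then have "((s + s) - 1) *\<^sub>R a + (s - 1) *\<^sub>R b = 0" using yo by simp
      then have "((s + s) - 1) *\<^sub>R (u - z0) + (s - 1) *\<^sub>R (w - z0) = 0" unfolding a_def b_def .
      then have "(s + s) - 1 = 0 \<and> s - 1 = 0" by (rule ind)
      then show False by linarith
    qed
    have "(s + s) - 1 \<le> 0 \<or> s - 1 \<le> 0" using s(2) by simp
    then show ?thesis using notin[OF _ yo yz] yz by blast
  qed
  define g1 where "g1 = r \<circ> linepath w q"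
  define g2 where "g2 = r \<circ> linepath q u"
  have p1: "path g1" unfolding g1_def
    by (rule path_continuous_image[OF path_linepath]) (rule continuous_on_subset[OF r(1)], use seg1 in auto)
  have p2: "path g2" unfolding g2_def
    by (rule path_continuous_image[OF path_linepath]) (rule continuous_on_subset[OF r(1)], use seg2 in auto)
  have e: "pathfinish g1 = pathstart g2" unfolding g1_def g2_def by (simp add: pathfinish_def pathstart_def linepath_def)
  show ?thesis
  proof
    show "path (g1 +++ g2)" using p1 p2 e by (rule path_join_imp)
    have "pathstart g1 = w" using r(4)[OF urf(2)] by (simp add: g1_def pathstart_def linepath_def)
    then show "pathstart (g1 +++ g2) = w" by simp
    have "pathfinish g2 = u" using r(4)[OF urf(1)] by (simp add: g2_def pathfinish_def linepath_def)
    then show "pathfinish (g1 +++ g2) = u" by simp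
    have "path_image g1 \<subseteq> rel_frontier H - open_segment u w"
      unfolding g1_def path_image_compose using seg1 r(2) by auto
    moreover have "path_image g2 \<subseteq> rel_frontier H - open_segment u w"
      unfolding g2_def path_image_compose using seg2 r(2) by auto
    ultimately show "path_image (g1 +++ g2) \<subseteq> rel_frontier H - open_segment u w"
      using path_image_join_subset[of g1 g2] by blast
  qed
qed




lemma closed_D:
  "closed {z::real^2. z$2 = 0 \<and> 0 \<le> z$1 \<and> z$1 \<le> 1}"
  "closed {z::real^2. z$1 = 0 \<and> 0 \<le> z$2 \<and> z$2 \<le> 1}"
  "closed {z::real^2. z$1 + z$2 = 1 \<and> 0 \<le> z$1 \<and> 0 \<le> z$2}"
  by (intro closed_Collect_conj closed_Collect_eq closed_Collect_le continuous_intros)+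

lemma seg_mid:
  fixes u w :: "real^2"
  assumes "0 \<le> s" "s \<le> 1"
  shows "w + s *\<^sub>R (midpoint u w - w) \<in> closed_segment u w"
        "u + s *\<^sub>R (midpoint u w - u) \<in> closed_segment u w"
proof -
  show "w + s *\<^sub>R (midpoint u w - w) \<in> closed_segment u w"
    unfolding in_segment
    by (rule exI[of _ "1 - s/2"]) (use assms in \<open>auto simp: vec_eq_iff midpoint_def algebra_simps\<close>)
  show "u + s *\<^sub>R (midpoint u w - u) \<in> closed_segment u w"
    unfolding in_segment
    by (rule exI[of _ "s/2"]) (use assms in \<open>auto simp: vec_eq_iff midpoint_def algebra_simps\<close>)
qed




lemma class_sum:
  fixes L :: "'a \<Rightarrow> nat"
  assumes "sum l V = 1" "a \<noteq> b"
  shows "(\<Sum>v\<in>V. l v * (if L v = a then 1 else 0)) + (\<Sum>v\<in>V. l v * (if L v = b then 1 else 0))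
       + (\<Sum>v\<in>V. l v * (if L v \<noteq> a \<and> L v \<noteq> b then 1 else 0)) = (1::real)"
proof -
  have "\<forall>v\<in>V. l v * (if L v = a then 1 else 0) + l v * (if L v = b then 1 else 0)
       + l v * (if L v \<noteq> a \<and> L v \<noteq> b then 1 else 0) = l v"
    using assms(2) by auto
  then have "(\<Sum>v\<in>V. l v * (if L v = a then 1 else 0) + l v * (if L v = b then 1 else 0)
       + l v * (if L v \<noteq> a \<and> L v \<noteq> b then 1 else 0)) = sum l V"
    by (intro sum.cong refl) blast
  then show ?thesis using assms(1) by (simp add: sum.distrib)
qed

lemma sum_zero_class:
  assumes "\<forall>v\<in>V. l v \<noteq> 0 \<longrightarrow> \<not> Q v"
  shows "(\<Sum>v\<in>V. l v * (if Q v then 1 else 0)) = (0::real)"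
  by (rule sum.neutral) (use assms in auto)

lemma sum_nonneg_class:
  assumes "\<forall>v. 0 \<le> l v"
  shows "0 \<le> (\<Sum>v\<in>V. l v * (if Q v then 1 else 0::real))"
  by (rule sum_nonneg) (use assms in auto)




theorem mainTheorem2:
  fixes H :: "(real^2) set" and c :: nat and T :: "(real^2) set set" and L :: "real^2 \<Rightarrow> nat"
  assumes "c \<ge> 3"
    and "convex_polygon H c"
    and "triangulation_of T H"
    and "sperner_labelling H c T L"
  shows "\<exists>t\<in>T. card (L ` {v. v extreme_point_of t}) = 3"
proof (rule ccontr)
  assume nofull: "\<not> (\<exists>t\<in>T. card (L ` {v. v extreme_point_of t}) = 3)"
  have pH: "polytope H" and aH: "aff_dim H = 2"
    using assms(2) unfolding convex_polygon_def by auto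
  have tri: "triangulation T" and simp2: "\<forall>t\<in>T. 2 simplex t" and UT: "\<Union>T = H"
    and pvT: "polygon_vertices H \<subseteq> tri_vertices T"
    using assms(3) unfolding triangulation_of_def by auto
  have inj: "inj_on L (polygon_vertices H)"
    and sp: "\<And>u w x. u \<in> polygon_vertices H \<Longrightarrow> w \<in> polygon_vertices H \<Longrightarrow> u \<noteq> w \<Longrightarrow>
              closed_segment u w face_of H \<Longrightarrow>
              x \<in> tri_vertices T \<Longrightarrow> x \<in> closed_segment u w \<Longrightarrow> L x = L u \<or> L x = L w"
    using assms(4) unfolding sperner_labelling_def by blast+
  have cH: "convex H" "bounded H" "compact H" "closed H"
    using pH polytope_imp_convex polytope_imp_bounded polytope_imp_compact polytope_imp_closed by auto
  have polyH: "polyhedron H" using pH by (rule polytope_imp_polyhedron)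
  have "H \<noteq> {}" using aH by auto
  have "rel_frontier H \<noteq> {}"
  proof
    assume "rel_frontier H = {}"
    then have "affine H" using rel_frontier_eq_empty by blast
    then have "affine hull H = H" by (simp add: hull_same)
    moreover have "affine hull H = UNIV" using aH aff_dim_eq_full[of H] by simp
    ultimately show False using cH(2) by simp
  qed
  then obtain x0 where "x0 \<in> rel_frontier H" by blast
  then obtain u w where uw: "u \<noteq> w" "u \<in> polygon_vertices H" "w \<in> polygon_vertices H"
    "closed_segment u w face_of H"
    using facet_segment[OF pH aH] by blast
  define a where "a = L u"
  define b where "b = L w"
  have ab: "a \<noteq> b" using inj uw unfolding a_def b_def inj_on_def by blast
  define P :: "real^2 \<Rightarrow> real^2" where
    "P v = (if L v = a then 0 else if L v = b then vector [1,0] else vector [0,1])" for v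
  have P1: "(P v)$1 = (if L v = b then 1 else 0)" for v
    using ab by (simp add: P_def)
  have P2: "(P v)$2 = (if L v \<noteq> a \<and> L v \<noteq> b then 1 else 0)" for v
    using ab by (simp add: P_def)
  define f where "f = Fm P T"
  have contf: "continuous_on H f" using Fm_cont[OF tri simp2, of P] UT by (simp add: f_def)
  have segH: "closed_segment u w \<subseteq> H" using face_of_imp_subset[OF uw(4)] .
  have uT: "u \<in> tri_vertices T" "w \<in> tri_vertices T" using uw pvT by auto
  have fu: "f u $1 = 0" using Fm_vertex[OF tri simp2 uT(1), of P] by (simp add: f_def P1 ab[unfolded a_def])
  have fw: "f w $1 = 1" using Fm_vertex[OF tri simp2 uT(2), of P] by (simp add: f_def P1 b_def)
  have rep: "\<exists>t\<in>T. x \<in> t \<and> (\<forall>v. 0 \<le> bc (verts t) x v) \<and>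
     f x $1 = (\<Sum>v\<in>verts t. bc (verts t) x v * (if L v = b then 1 else 0)) \<and>
     f x $2 = (\<Sum>v\<in>verts t. bc (verts t) x v * (if L v \<noteq> a \<and> L v \<noteq> b then 1 else 0)) \<and>
     (\<Sum>v\<in>verts t. bc (verts t) x v * (if L v = a then 1 else 0)) + f x $1 + f x $2 = 1"
    if xH: "x \<in> H" for x
  proof -
    obtain t where tT: "t \<in> T" and xt: "x \<in> t" using xH UT by blast
    have s: "2 simplex t" using simp2 tT by blast
    note B = bc_simplex[OF s xt]
    have e1: "f x $1 = (\<Sum>v\<in>verts t. bc (verts t) x v * (if L v = b then 1 else 0))"
      unfolding f_def Fm_coord[OF tri simp2 tT xt] P1 ..
    have e2: "f x $2 = (\<Sum>v\<in>verts t. bc (verts t) x v * (if L v \<noteq> a \<and> L v \<noteq> b then 1 else 0))"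
      unfolding f_def Fm_coord[OF tri simp2 tT xt] P2 ..
    show ?thesis using tT xt B(4) e1 e2 class_sum[OF B(2) ab, of L] by auto
  qed
  define D where "D = {z::real^2. 0 \<le> z$1 \<and> 0 \<le> z$2 \<and> z$1 + z$2 \<le> 1 \<and> (z$1 = 0 \<or> z$2 = 0 \<or> z$1 + z$2 = 1)}"
  have fD: "f x \<in> D" if xH: "x \<in> H" for x
  proof -
    obtain t where tT: "t \<in> T" and xt: "x \<in> t" and nn: "\<forall>v. 0 \<le> bc (verts t) x v"
      and e1: "f x $1 = (\<Sum>v\<in>verts t. bc (verts t) x v * (if L v = b then 1 else 0))"
      and e2: "f x $2 = (\<Sum>v\<in>verts t. bc (verts t) x v * (if L v \<noteq> a \<and> L v \<noteq> b then 1 else 0))"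
      and e3: "(\<Sum>v\<in>verts t. bc (verts t) x v * (if L v = a then 1 else 0)) + f x $1 + f x $2 = 1"
      using rep[OF xH] by blast
    have s: "2 simplex t" using simp2 tT by blast
    have fin: "finite (verts t)" and c3: "card (verts t) = 3" using simplex2_facts[OF s] by auto
    have notall: "\<not> ((\<exists>v\<in>verts t. L v = a) \<and> (\<exists>v\<in>verts t. L v = b) \<and> (\<exists>v\<in>verts t. L v \<noteq> a \<and> L v \<noteq> b))"
    proof
      assume "(\<exists>v\<in>verts t. L v = a) \<and> (\<exists>v\<in>verts t. L v = b) \<and> (\<exists>v\<in>verts t. L v \<noteq> a \<and> L v \<noteq> b)"
      then obtain v1 v2 v3 where v: "v1 \<in> verts t" "v2 \<in> verts t" "v3 \<in> verts t" "L v1 = a" "L v2 = b"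
         "L v3 \<noteq> a" "L v3 \<noteq> b" by blast
      have "{a, b, L v3} \<subseteq> L ` verts t" using v by blast
      then have "card {a, b, L v3} \<le> card (L ` verts t)" by (rule card_mono[OF finite_imageI[OF fin]])
      moreover have "card {a, b, L v3} = 3" using v ab by auto
      moreover have "card (L ` verts t) \<le> 3" using card_image_le[OF fin, of L] c3 by simp
      ultimately have "card (L ` verts t) = 3" by simp
      then show False using nofull tT unfolding verts_def by blast
    qed
    have S0: "0 \<le> (\<Sum>v\<in>verts t. bc (verts t) x v * (if L v = a then 1 else 0))" "0 \<le> f x $1" "0 \<le> f x $2"
      unfolding e1 e2 by (rule sum_nonneg_class[OF nn])+
    consider "\<not> (\<exists>v\<in>verts t. L v = a)" | "\<not> (\<exists>v\<in>verts t. L v = b)" | "\<not> (\<exists>v\<in>verts t. L v \<noteq> a \<and> L v \<noteq> b)"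
      using notall by blast
    then show ?thesis
    proof cases
      case 1
      then have "(\<Sum>v\<in>verts t. bc (verts t) x v * (if L v = a then 1 else 0)) = 0"
        by (intro sum.neutral) auto
      then show ?thesis using e3 S0 unfolding D_def by auto
    next
      case 2
      then have "f x $1 = 0" unfolding e1 by (intro sum.neutral) auto
      then show ?thesis using e3 S0 unfolding D_def by auto
    next
      case 3
      then have "f x $2 = 0" unfolding e2 by (intro sum.neutral) auto
      then show ?thesis using e3 S0 unfolding D_def by auto
    qed
  qed
  have fseg: "f x $2 = 0" if xs: "x \<in> closed_segment u w" for x
  proof -
    have xH: "x \<in> H" using xs segH by blast
    obtain t where tT: "t \<in> T" and xt: "x \<in> t" and nn: "\<forall>v. 0 \<le> bc (verts t) x v"
      and e2: "f x $2 = (\<Sum>v\<in>verts t. bc (verts t) x v * (if L v \<noteq> a \<and> L v \<noteq> b then 1 else 0))"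
      using rep[OF xH] by blast
    have s: "2 simplex t" using simp2 tT by blast
    note B = bc_simplex[OF s xt]
    have tH: "verts t \<subseteq> H" using verts_subset tT UT by blast
    have nnb: "\<forall>v\<in>verts t. 0 \<le> bc (verts t) x v" using nn by blast
    have "\<forall>v\<in>verts t. bc (verts t) x v \<noteq> 0 \<longrightarrow> \<not> (L v \<noteq> a \<and> L v \<noteq> b)"
    proof (intro ballI impI)
      fix v assume v: "v \<in> verts t" "bc (verts t) x v \<noteq> 0"
      have pos: "bc (verts t) x v > 0" using nn v(2) by (metis less_eq_real_def)
      have "v \<in> closed_segment u w"
        by (rule face_support[OF polyH uw(4) simplex2_facts(1)[OF s] tH nnb B(2) B(3) xs v(1) pos])
      moreover have "v \<in> tri_vertices T" using v tT unfolding tri_vertices_def verts_def by blast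
      ultimately have "L v = L u \<or> L v = L w" using sp[OF uw(2,3,1,4)] by blast
      then show "\<not> (L v \<noteq> a \<and> L v \<noteq> b)" unfolding a_def b_def by blast
    qed
    then show ?thesis unfolding e2 by (rule sum_zero_class)
  qed
  have fbd: "\<not> (f x $2 = 0 \<and> 0 < f x $1 \<and> f x $1 < 1)"
    if xr: "x \<in> rel_frontier H" "x \<notin> open_segment u w" for x
  proof (cases "x = u \<or> x = w")
    case True
    then show ?thesis using fu fw by auto
  next
    case False
    have xH: "x \<in> H" using xr(1) cH(4) by (auto simp: rel_frontier_def)
    obtain y z where yz: "y \<noteq> z" "y \<in> polygon_vertices H" "z \<in> polygon_vertices H"
      "closed_segment y z face_of H" "x \<in> closed_segment y z"
      using facet_segment[OF pH aH xr(1)] by blast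
    have xnot: "x \<notin> closed_segment u w" using xr(2) False unfolding open_segment_def by blast
    have cases: "(y \<noteq> u \<and> z \<noteq> u) \<or> (y \<noteq> w \<and> z \<noteq> w)"
    proof (rule ccontr)
      assume "\<not> ((y \<noteq> u \<and> z \<noteq> u) \<or> (y \<noteq> w \<and> z \<noteq> w))"
      then have "(y = u \<and> z = w) \<or> (y = w \<and> z = u)" using yz(1) uw(1) by blast
      then have "closed_segment y z = closed_segment u w" using closed_segment_commute by blast
      then show False using xnot yz(5) by blast
    qed
    obtain t where tT: "t \<in> T" and xt: "x \<in> t" and nn: "\<forall>v. 0 \<le> bc (verts t) x v"
      and e1: "f x $1 = (\<Sum>v\<in>verts t. bc (verts t) x v * (if L v = b then 1 else 0))"
      and e2: "f x $2 = (\<Sum>v\<in>verts t. bc (verts t) x v * (if L v \<noteq> a \<and> L v \<noteq> b then 1 else 0))"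
      and e3: "(\<Sum>v\<in>verts t. bc (verts t) x v * (if L v = a then 1 else 0)) + f x $1 + f x $2 = 1"
      using rep[OF xH] by blast
    have s: "2 simplex t" using simp2 tT by blast
    note B = bc_simplex[OF s xt]
    have tH: "verts t \<subseteq> H" using verts_subset tT UT by blast
    have nnb: "\<forall>v\<in>verts t. 0 \<le> bc (verts t) x v" using nn by blast
    have supp: "L v = L y \<or> L v = L z" if v: "v \<in> verts t" "bc (verts t) x v \<noteq> 0" for v
    proof -
      have pos: "bc (verts t) x v > 0" using nn v(2) by (metis less_eq_real_def)
      have "v \<in> closed_segment y z"
        by (rule face_support[OF polyH yz(4) simplex2_facts(1)[OF s] tH nnb B(2) B(3) yz(5) v(1) pos])
      moreover have "v \<in> tri_vertices T" using v tT unfolding tri_vertices_def verts_def by blast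
      ultimately show "L v = L y \<or> L v = L z" using sp[OF yz(2,3,1,4)] by blast
    qed
    have Linj: "p = q" if "p \<in> polygon_vertices H" "q \<in> polygon_vertices H" "L p = L q" for p q
      using inj that unfolding inj_on_def by blast
    from cases show ?thesis
    proof
      assume nu: "y \<noteq> u \<and> z \<noteq> u"
      have "L y \<noteq> a" "L z \<noteq> a" using nu Linj[OF yz(2) uw(2)] Linj[OF yz(3) uw(2)] unfolding a_def by auto
      then have "\<forall>v\<in>verts t. bc (verts t) x v \<noteq> 0 \<longrightarrow> \<not> (L v = a)" using supp by metis
      then have "(\<Sum>v\<in>verts t. bc (verts t) x v * (if L v = a then 1 else 0)) = 0" by (rule sum_zero_class)
      then show ?thesis using e3 by auto
    next
      assume nw: "y \<noteq> w \<and> z \<noteq> w"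
      have "L y \<noteq> b" "L z \<noteq> b" using nw Linj[OF yz(2) uw(3)] Linj[OF yz(3) uw(3)] unfolding b_def by auto
      then have "\<forall>v\<in>verts t. bc (verts t) x v \<noteq> 0 \<longrightarrow> \<not> (L v = b)" using supp by metis
      then have "f x $1 = 0" unfolding e1 by (rule sum_zero_class)
      then show ?thesis by auto
    qed
  qed
  obtain g where g: "path g" "pathstart g = w" "pathfinish g = u"
     "path_image g \<subseteq> rel_frontier H - open_segment u w"
    using boundary_path[OF pH aH uw(4) uw(1)] by blast
  define m where "m = midpoint u w"
  define k where "k z = (if z$2 = 0 then g (z$1) else if z$1 = 0 then w + z$2 *\<^sub>R (m - w)
                         else u + z$2 *\<^sub>R (m - u))" for z :: "real^2"
  have g0: "g 0 = w" and g1: "g 1 = u" using g(2,3) unfolding pathstart_def pathfinish_def by auto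
  have contk: "continuous_on D k"
  proof -
    define D1 where "D1 = {z::real^2. z$2 = 0 \<and> 0 \<le> z$1 \<and> z$1 \<le> 1}"
    define D2 where "D2 = {z::real^2. z$1 = 0 \<and> 0 \<le> z$2 \<and> z$2 \<le> 1}"
    define D3 where "D3 = {z::real^2. z$1 + z$2 = 1 \<and> 0 \<le> z$1 \<and> 0 \<le> z$2}"
    have c1: "continuous_on D1 k"
    proof -
      have "continuous_on D1 (g \<circ> (\<lambda>z. z$1))"
      proof (rule continuous_on_compose)
        show "continuous_on D1 (\<lambda>z. z$1)" by (intro continuous_intros)
        show "continuous_on ((\<lambda>z. z$1) ` D1) g"
          by (rule continuous_on_subset[OF g(1)[unfolded path_def]]) (auto simp: D1_def)
      qed
      then show ?thesis by (rule continuous_on_eq) (auto simp: k_def D1_def)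
    qed
    have c2: "continuous_on D2 k"
    proof -
      have "continuous_on D2 (\<lambda>z. w + z$2 *\<^sub>R (m - w))" by (intro continuous_intros)
      then show ?thesis by (rule continuous_on_eq) (auto simp: k_def D2_def g0)
    qed
    have c3: "continuous_on D3 k"
    proof -
      have "continuous_on D3 (\<lambda>z. u + z$2 *\<^sub>R (m - u))" by (intro continuous_intros)
      moreover have "u + z$2 *\<^sub>R (m - u) = k z" if "z \<in> D3" for z
      proof -
        have z: "z$1 + z$2 = 1" using that by (simp add: D3_def)
        show ?thesis
        proof (cases "z$2 = 0")
          case True
          then have "z$1 = 1" using z by simp
          then show ?thesis using True by (simp add: k_def g1)
        next
          case False
          show ?thesis
          proof (cases "z$1 = 0")
            case True
            then have "z$2 = 1" using z by simp
            then show ?thesis using True False by (simp add: k_def)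
          next
            case False2: False
            then show ?thesis using False by (simp add: k_def)
          qed
        qed
      qed
      ultimately show ?thesis by (rule continuous_on_eq)
    qed
    have cl: "closed D1" "closed D2" "closed D3" unfolding D1_def D2_def D3_def using closed_D by auto
    have "continuous_on (D1 \<union> D2 \<union> D3) k"
      by (intro continuous_on_closed_Un closed_Un cl c1 c2 c3)
    moreover have "D \<subseteq> D1 \<union> D2 \<union> D3" unfolding D_def D1_def D2_def D3_def by auto
    ultimately show ?thesis by (rule continuous_on_subset)
  qed
  have kD: "k z \<in> H" if zD: "z \<in> D" for z
  proof -
    have z: "0 \<le> z$1" "0 \<le> z$2" "z$1 + z$2 \<le> 1" using zD by (auto simp: D_def)
    show ?thesis
    proof (cases "z$2 = 0")
      case True
      then have "k z = g (z$1)" by (simp add: k_def)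
      moreover have "z$1 \<in> {0..1}" using z True by auto
      ultimately have "k z \<in> path_image g" by (auto simp: path_image_def)
      then have "k z \<in> rel_frontier H" using g(4) by blast
      then show ?thesis using cH(4) by (auto simp: rel_frontier_def)
    next
      case False
      then have "k z = w + z$2 *\<^sub>R (m - w) \<or> k z = u + z$2 *\<^sub>R (m - u)" by (simp add: k_def)
      moreover have "z$2 \<le> 1" using z by linarith
      ultimately have "k z \<in> closed_segment u w" using seg_mid[where s="z$2" and u=u and w=w] z unfolding m_def by auto
      then show ?thesis using segH by blast
    qed
  qed
  have "\<exists>x\<in>H. (k \<circ> f) x = x"
  proof (rule brouwer[OF cH(3,1) \<open>H \<noteq> {}\<close>])
    show "continuous_on H (k \<circ> f)"
      by (rule continuous_on_compose[OF contf continuous_on_subset[OF contk]]) (use fD in auto)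
    show "(k \<circ> f) \<in> H \<rightarrow> H" using fD kD by auto
  qed blast
  then obtain x where xH: "x \<in> H" and fx: "k (f x) = x" by auto
  have zD: "f x \<in> D" using fD[OF xH] .
  have z1: "0 \<le> f x $1" "0 \<le> f x $2" "f x $1 + f x $2 \<le> 1" using zD by (auto simp: D_def)
  show False
  proof (cases "f x $2 = 0")
    case True
    then have "k (f x) = g (f x $1)" by (simp add: k_def)
    then have xg: "x = g (f x $1)" using fx by metis
    have "f x $1 \<in> {0..1}" using z1 True by auto
    then have "g (f x $1) \<in> path_image g" by (auto simp: path_image_def)
    then have "x \<in> rel_frontier H" "x \<notin> open_segment u w" using g(4) xg by auto
    then have "\<not> (0 < f x $1 \<and> f x $1 < 1)" using fbd True by blast
    then have "f x $1 = 0 \<or> f x $1 = 1" using z1 True by auto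
    then show False
    proof
      assume h: "f x $1 = 0"
      then have "x = w" using xg g0 by metis
      then show False using h fw by simp
    next
      assume h: "f x $1 = 1"
      then have "x = u" using xg g1 by metis
      then show False using h fu by simp
    qed
  next
    case False
    have le1: "f x $2 \<le> 1" using z1 by linarith
    show False
    proof (cases "f x $1 = 0")
      case True
      then have "k (f x) = w + f x $2 *\<^sub>R (m - w)" using False by (simp add: k_def)
      then have "x = w + f x $2 *\<^sub>R (m - w)" using fx by metis
      then have "x \<in> closed_segment u w" using seg_mid(1)[where s="f x $2" and u=u and w=w] z1 le1 unfolding m_def by metis
      then show False using fseg False by blast
    next
      case False2: False
      then have "k (f x) = u + f x $2 *\<^sub>R (m - u)" using False by (simp add: k_def)
      then have "x = u + f x $2 *\<^sub>R (m - u)" using fx by metis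
      then have "x \<in> closed_segment u w" using seg_mid(2)[where s="f x $2" and u=u and w=w] z1 le1 unfolding m_def by metis
      then show False using fseg False by blast
    qed
  qed
qed


end
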